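(* Let $b\ge0$. Consider an instance with $m$ machines and $n$ jobs, an assignment $\{J_i\}_{i=1}^m$, and integers $\ell_1,\dots,\ell_m\in[m]$ such that for every $\ell\in[m]$ at most $\ell$ machines $i$ have $\ell_i\le\ell$. Suppose $$\sum_{i=1}^m\sum_{j\in J_i}\mathbb{E}[X''_{ij}]\le2\qquad\text{and}\qquad\sum_{j\in J_i}\beta_{\ell_i}(X'_{ij})\le b+1\ \ \text{for all } i\in[m].$$ Then the expected makespan $\mathbb{E}\big[\max_{i}\sum_{j\in J_i}X_{ij}\big]$ is at most $4b+10$.
   Context: Nonnegative random variables $X_{ij}$ (size of job $j$ on machine $i$), with $X_{ij}$ and $X_{i'j'}$ independent whenever $j\ne j'$. $X'_{ij}:=X_{ij}\mathbf{1}[X_{ij}\le1]$, $X''_{ij}:=X_{ij}\mathbf{1}[X_{ij}>1]$. Effective size: $\beta_k(X):=\frac{1}{\ln k}\ln\mathbb{E}[e^{(\ln k)X}]$ for integers $k\ge2$, $\beta_1(X):=\mathbb{E}[X]$. *)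

theory Defs
  imports "HOL-Probability.Probability"
begin

definition small_part :: "('a \<Rightarrow> real) \<Rightarrow> 'a \<Rightarrow> real" where
  "small_part Y = (\<lambda>\<omega>. if Y \<omega> \<le> 1 then Y \<omega> else 0)"

definition large_part :: "('a \<Rightarrow> real) \<Rightarrow> 'a \<Rightarrow> real" where
  "large_part Y = (\<lambda>\<omega>. if Y \<omega> > 1 then Y \<omega> else 0)"

definition eff_size :: "'a measure \<Rightarrow> nat \<Rightarrow> ('a \<Rightarrow> real) \<Rightarrow> real" where
  "eff_size M k Y = (if k \<le> 1 then (\<integral>\<omega>. Y \<omega> \<partial>M)
      else ln (\<integral>\<omega>. exp (ln (real k) * Y \<omega>) \<partial>M) / ln (real k))"

end

theory Submission
  imports Defs
begin


lemma telesc: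
  fixes f :: "nat \<Rightarrow> real"
  shows "(\<Sum>r=1..m. (f r - f (Suc r)) * real r) + real m * f (Suc m) = (\<Sum>r=1..m. f r)"
proof (induction m)
  case 0 then show ?case by simp
next
  case (Suc m)
  then show ?case by (simp add: algebra_simps)
qed

lemma tail_sum:
  fixes f :: "nat \<Rightarrow> real"
  assumes "1 \<le> a" "a \<le> m"
  shows "(\<Sum>r=1..m. if a \<le> r then f r - f (Suc r) else 0) = f a - f (Suc m)"
proof -
  have "(\<Sum>r=1..m. if a \<le> r then f r - f (Suc r) else 0) = (\<Sum>r\<in>{r\<in>{1..m}. a \<le> r}. f r - f (Suc r))"
    by (simp only: sum.inter_filter[OF finite_atLeastAtMost])
  also have "{r\<in>{1..m}. a \<le> r} = {a..m}" using assms by auto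
  also have "(\<Sum>r=a..m. f r - f (Suc r)) = - (\<Sum>r=a..m. f (Suc r) - f r)"
    by (simp add: sum_negf[symmetric])
  also have "\<dots> = f a - f (Suc m)" using assms by (subst sum_Suc_diff) auto
  finally show ?thesis .
qed

lemma majorize:
  fixes f :: "nat \<Rightarrow> real" and lv :: "nat \<Rightarrow> nat"
  assumes range: "\<And>i. i < m \<Longrightarrow> lv i \<in> {1..m}"
    and cnt: "\<And>l. l \<in> {1..m} \<Longrightarrow> card {i. i < m \<and> lv i \<le> l} \<le> l"
    and dec: "\<And>a b. 1 \<le> a \<Longrightarrow> a \<le> b \<Longrightarrow> f b \<le> f a"
  shows "(\<Sum>i<m. f (lv i)) \<le> (\<Sum>l=1..m. f l)"
proof -
  define d where "d r = f r - f (Suc r)" for r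
  have "(\<Sum>i<m. f (lv i)) = (\<Sum>i<m. (\<Sum>r=1..m. if lv i \<le> r then d r else 0) + f (Suc m))"
  proof (intro sum.cong refl)
    fix i assume "i \<in> {..<m}"
    then have "1 \<le> lv i" "lv i \<le> m" using range by auto
    from tail_sum[OF this, of f] show "f (lv i) = (\<Sum>r=1..m. if lv i \<le> r then d r else 0) + f (Suc m)"
      unfolding d_def by linarith
  qed
  also have "\<dots> = (\<Sum>r=1..m. \<Sum>i<m. if lv i \<le> r then d r else 0) + real m * f (Suc m)"
    by (simp add: sum.distrib) (rule sum.swap)
  also have "(\<Sum>r=1..m. \<Sum>i<m. if lv i \<le> r then d r else 0) = (\<Sum>r=1..m. d r * real (card {i. i < m \<and> lv i \<le> r}))"
  proof (intro sum.cong refl)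
    fix r
    have "(\<Sum>i<m. if lv i \<le> r then d r else 0) = (\<Sum>i\<in>{i\<in>{..<m}. lv i \<le> r}. d r)"
      by (simp only: sum.inter_filter[OF finite_lessThan])
    also have "{i\<in>{..<m}. lv i \<le> r} = {i. i < m \<and> lv i \<le> r}" by auto
    finally show "(\<Sum>i<m. if lv i \<le> r then d r else 0) = d r * real (card {i. i < m \<and> lv i \<le> r})"
      by simp
  qed
  also have "\<dots> \<le> (\<Sum>r=1..m. d r * real r)"
  proof (intro sum_mono mult_left_mono)
    fix r assume r: "r \<in> {1..m}"
    show "real (card {i. i < m \<and> lv i \<le> r}) \<le> real r" using cnt[OF r] by simp
    show "0 \<le> d r" using dec[of r "Suc r"] r by (simp add: d_def)
  qed
  finally show ?thesis using telesc[of f m] by (simp add: d_def)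
qed

lemma gsum:
  fixes b :: real
  assumes "b \<ge> 0"
  shows "(\<Sum>l=1..m. if l \<le> 1 then b + 1 else 2 / (real l)^2) \<le> b + 3"
proof (cases "m = 0")
  case True then show ?thesis using assms by simp
next
  case False
  have "m \<ge> 1 \<Longrightarrow> (\<Sum>l=1..m. if l \<le> 1 then b + 1 else 2 / (real l)^2) \<le> b + 3 - 2 / real m"
  proof (induction m rule: nat_induct_at_least)
    case base then show ?case by simp
  next
    case (Suc m)
    have mm: "real m * (real m + 1) \<le> (real m + 1)^2" by (simp add: power2_eq_square)
    have "2 / (real m + 1)^2 \<le> 2 / (real m * (real m + 1))"
      using Suc(1) by (intro divide_left_mono mm) auto
    also have "\<dots> = 2 / real m - 2 / real (Suc m)" using Suc(1) by (simp add: field_simps)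
    finally have "2 / (real (Suc m))^2 \<le> 2 / real m - 2 / real (Suc m)" by (simp add: add.commute)
    then show ?case using Suc by (simp add: sum.cl_ivl_Suc)
  qed
  then show ?thesis using False by (smt (verit) divide_nonneg_nonneg of_nat_0_le_iff less_one not_less)
qed



theorem mainTheorem7:
  fixes M :: "'a measure" and X :: "nat \<Rightarrow> nat \<Rightarrow> 'a \<Rightarrow> real"
    and m n :: nat and J :: "nat \<Rightarrow> nat set" and lv :: "nat \<Rightarrow> nat" and b :: real
  assumes P: "prob_space M"
    and meas: "\<And>i j. i < m \<Longrightarrow> j < n \<Longrightarrow> X i j \<in> borel_measurable M"
    and nonneg: "\<And>i j \<omega>. i < m \<Longrightarrow> j < n \<Longrightarrow> \<omega> \<in> space M \<Longrightarrow> X i j \<omega> \<ge> 0"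
    and indep: "prob_space.indep_vars M (\<lambda>j. PiM {..<m} (\<lambda>_. borel))
                  (\<lambda>j \<omega>. \<lambda>i\<in>{..<m}. X i j \<omega>) {..<n}"
    and J_sub: "\<And>i. i < m \<Longrightarrow> J i \<subseteq> {..<n}"
    and J_disj: "\<And>i i'. i < m \<Longrightarrow> i' < m \<Longrightarrow> i \<noteq> i' \<Longrightarrow> J i \<inter> J i' = {}"
    and J_cover: "(\<Union>i<m. J i) = {..<n}"
    and l_range: "\<And>i. i < m \<Longrightarrow> lv i \<in> {1..m}"
    and l_count: "\<And>l. l \<in> {1..m} \<Longrightarrow> card {i. i < m \<and> lv i \<le> l} \<le> l"
    and b_nonneg: "b \<ge> 0"
    and large: "(\<Sum>i<m. \<Sum>j\<in>J i. \<integral>\<^sup>+ \<omega>. ennreal (large_part (X i j) \<omega>) \<partial>M) \<le> 2"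
    and small: "\<And>i. i < m \<Longrightarrow> (\<Sum>j\<in>J i. eff_size M (lv i) (small_part (X i j))) \<le> b + 1"
  shows "(\<integral>\<^sup>+ \<omega>. (SUP i\<in>{..<m}. ennreal (\<Sum>j\<in>J i. X i j \<omega>)) \<partial>M) \<le> ennreal (4 * b + 10)"
proof -
  interpret prob_space M by (rule P)
  define A where "A = b + 3"
  define S where "S i \<omega> = (\<Sum>j\<in>J i. small_part (X i j) \<omega>)" for i \<omega>
  define g where "g l = (if l \<le> 1 then b + 1 else 2 / (real l)^2)" for l :: nat
  have A0: "A \<ge> 0" using b_nonneg by (simp add: A_def)
  have jn: "j < n" if "i < m" "j \<in> J i" for i j using J_sub that by auto
  have finJ: "finite (J i)" if "i < m" for i using J_sub[OF that] finite_subset by blast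
  have sm_meas: "small_part (X i j) \<in> borel_measurable M" if "i < m" "j \<in> J i" for i j
    using meas[OF that(1) jn[OF that]] unfolding small_part_def by measurable
  have lg_meas: "large_part (X i j) \<in> borel_measurable M" if "i < m" "j \<in> J i" for i j
    using meas[OF that(1) jn[OF that]] unfolding large_part_def by measurable
  have sm_bnd: "0 \<le> small_part (X i j) \<omega> \<and> small_part (X i j) \<omega> \<le> 1"
    if "i < m" "j \<in> J i" "\<omega> \<in> space M" for i j \<omega>
    using nonneg[OF that(1) jn[OF that(1,2)] that(3)] unfolding small_part_def by auto
  have lg_nn: "0 \<le> large_part (X i j) \<omega>" for i j \<omega> unfolding large_part_def by auto
  have S_nn: "0 \<le> S i \<omega>" if "i < m" "\<omega> \<in> space M" for i \<omega>
    unfolding S_def using sm_bnd that by (intro sum_nonneg) auto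
  have S_meas: "S i \<in> borel_measurable M" if "i < m" for i
    unfolding S_def using sm_meas that by (intro borel_measurable_sum) auto

  have mach: "(\<integral>\<^sup>+ \<omega>. ennreal (max 0 (S i \<omega> - A)) \<partial>M) \<le> ennreal (g (lv i))" if i: "i < m" for i
  proof -
    have lvi: "1 \<le> lv i" "lv i \<le> m" using l_range[OF i] by auto
    show ?thesis
    proof (cases "lv i \<le> 1")
      case True
      have "(\<integral>\<^sup>+ \<omega>. ennreal (max 0 (S i \<omega> - A)) \<partial>M) \<le> (\<integral>\<^sup>+ \<omega>. ennreal (S i \<omega>) \<partial>M)"
        using S_nn[OF i] A0 by (intro nn_integral_mono ennreal_leI) auto
      also have "\<dots> = (\<Sum>j\<in>J i. \<integral>\<^sup>+ \<omega>. ennreal (small_part (X i j) \<omega>) \<partial>M)"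
      proof -
        have "(\<integral>\<^sup>+ \<omega>. ennreal (S i \<omega>) \<partial>M) = (\<integral>\<^sup>+ \<omega>. (\<Sum>j\<in>J i. ennreal (small_part (X i j) \<omega>)) \<partial>M)"
          unfolding S_def using sm_bnd i by (intro nn_integral_cong) (auto intro!: sum_ennreal[symmetric])
        also have "\<dots> = (\<Sum>j\<in>J i. \<integral>\<^sup>+ \<omega>. ennreal (small_part (X i j) \<omega>) \<partial>M)"
          using sm_meas i by (intro nn_integral_sum) auto
        finally show ?thesis .
      qed
      also have "\<dots> = (\<Sum>j\<in>J i. ennreal (eff_size M (lv i) (small_part (X i j))))"
      proof (intro sum.cong refl)
        fix j assume j: "j \<in> J i"
        have int: "integrable M (small_part (X i j))"
          using sm_bnd[OF i j] sm_meas[OF i j] by (intro integrable_const_bound[where B=1]) auto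
        show "(\<integral>\<^sup>+ \<omega>. ennreal (small_part (X i j) \<omega>) \<partial>M) = ennreal (eff_size M (lv i) (small_part (X i j)))"
          using True sm_bnd[OF i j] by (subst nn_integral_eq_integral[OF int]) (auto simp: eff_size_def)
      qed
      also have "\<dots> = ennreal (\<Sum>j\<in>J i. eff_size M (lv i) (small_part (X i j)))"
      proof (intro sum_ennreal)
        fix j assume j: "j \<in> J i"
        show "0 \<le> eff_size M (lv i) (small_part (X i j))"
          using True sm_bnd[OF i j] by (auto simp: eff_size_def intro!: integral_nonneg_AE)
      qed
      also have "\<dots> \<le> ennreal (g (lv i))"
        using small[OF i] True by (intro ennreal_leI) (simp add: g_def)
      finally show ?thesis .
    next
      case False
      define k where "k = lv i"
      define c where "c = ln (real k)"
      have k2: "k \<ge> 2" using False by (simp add: k_def)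
      have c_half: "c \<ge> 1/2"
      proof -
        have "ln 2 \<le> ln (real k)" using k2 by (intro ln_mono) auto
        then show ?thesis using ln2_ge_two_thirds unfolding c_def by linarith
      qed
      have c0: "c > 0" using c_half by simp
      define E where "E j = (\<integral>\<omega>. exp (c * small_part (X i j) \<omega>) \<partial>M)" for j
      have intE: "integrable M (\<lambda>\<omega>. exp (c * small_part (X i j) \<omega>))" if j: "j \<in> J i" for j
        using sm_bnd[OF i j] sm_meas[OF i j] c0
        by (intro integrable_const_bound[where B="exp c"]) auto
      have E1: "E j \<ge> 1" if j: "j \<in> J i" for j
      proof -
        have "(\<integral>\<omega>. 1 \<partial>M) \<le> E j"
          unfolding E_def using sm_bnd[OF i j] c0 intE[OF j]
          by (intro integral_mono_AE) auto
        then show ?thesis by (simp add: prob_space)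
      qed
      have eff: "eff_size M (lv i) (small_part (X i j)) = ln (E j) / c" if j: "j \<in> J i" for j
        using False unfolding eff_size_def E_def c_def k_def by simp
      have nnE: "(\<integral>\<^sup>+ \<omega>. ennreal (exp (c * small_part (X i j) \<omega>)) \<partial>M) = ennreal (E j)" if j: "j \<in> J i" for j
        unfolding E_def by (rule nn_integral_eq_integral[OF intE[OF j]]) auto
      have ind: "indep_vars (\<lambda>_. borel) (\<lambda>j \<omega>. ennreal (exp (c * small_part (X i j) \<omega>))) (J i)"
      proof -
        have "indep_vars (\<lambda>_. borel) (\<lambda>j \<omega>. (\<lambda>v. ennreal (exp (c * (if v i \<le> 1 then v i else 0)))) ((\<lambda>i'\<in>{..<m}. X i' j \<omega>))) (J i)"
        proof (rule indep_vars_compose2[OF indep_vars_subset[OF indep J_sub[OF i]]])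
          fix j assume "j \<in> J i"
          have ii: "i \<in> {..<m}" using i by simp
          show "(\<lambda>v. ennreal (exp (c * (if v i \<le> 1 then v i else 0)))) \<in> borel_measurable (PiM {..<m} (\<lambda>_. borel))"
            using ii by measurable
        qed
        then show ?thesis using i by (simp add: small_part_def cong: if_cong)
      qed
      have "(\<integral>\<^sup>+ \<omega>. ennreal (max 0 (S i \<omega> - A)) \<partial>M) \<le>
          (\<integral>\<^sup>+ \<omega>. ennreal (2 * exp (- c * A)) * (\<Prod>j\<in>J i. ennreal (exp (c * small_part (X i j) \<omega>))) \<partial>M)"
      proof (intro nn_integral_mono)
        fix \<omega> assume \<omega>: "\<omega> \<in> space M"
        have "max 0 (S i \<omega> - A) \<le> 2 * exp (c * (S i \<omega> - A))"
        proof (cases "S i \<omega> - A \<le> 0")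
          case True then show ?thesis by (simp add: max_def)
        next
          case False
          have "1 + c * (S i \<omega> - A) \<le> exp (c * (S i \<omega> - A))" by (rule exp_ge_add_one_self)
          moreover have "(S i \<omega> - A) \<le> 2 * (c * (S i \<omega> - A))"
          proof -
            have "(1/2) * (S i \<omega> - A) \<le> c * (S i \<omega> - A)"
              using c_half False by (intro mult_right_mono) auto
            then show ?thesis by simp
          qed
          ultimately have "S i \<omega> - A \<le> 2 * exp (c * (S i \<omega> - A))" by linarith
          then show ?thesis using False by (simp add: max_def)
        qed
        also have "\<dots> = 2 * exp (- c * A) * (\<Prod>j\<in>J i. exp (c * small_part (X i j) \<omega>))"
          unfolding S_def by (simp add: exp_sum[OF finJ[OF i], symmetric] sum_distrib_left exp_add[symmetric] algebra_simps)
        finally have "ennreal (max 0 (S i \<omega> - A)) \<le> ennreal (2 * exp (- c * A) * (\<Prod>j\<in>J i. exp (c * small_part (X i j) \<omega>)))"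
          by (rule ennreal_leI)
        also have "\<dots> = ennreal (2 * exp (- c * A)) * (\<Prod>j\<in>J i. ennreal (exp (c * small_part (X i j) \<omega>)))"
          by (simp add: ennreal_mult prod_ennreal prod_nonneg)
        finally show "ennreal (max 0 (S i \<omega> - A)) \<le> \<dots>" .
      qed
      also have "\<dots> = ennreal (2 * exp (- c * A)) * (\<integral>\<^sup>+ \<omega>. (\<Prod>j\<in>J i. ennreal (exp (c * small_part (X i j) \<omega>))) \<partial>M)"
      proof (rule nn_integral_cmult)
        show "(\<lambda>\<omega>. \<Prod>j\<in>J i. ennreal (exp (c * small_part (X i j) \<omega>))) \<in> borel_measurable M"
        proof (intro borel_measurable_prod_ennreal)
          fix j assume j: "j \<in> J i"
          show "(\<lambda>\<omega>. ennreal (exp (c * small_part (X i j) \<omega>))) \<in> borel_measurable M"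
            using sm_meas[OF i j] by measurable
        qed
      qed
      also have "(\<integral>\<^sup>+ \<omega>. (\<Prod>j\<in>J i. ennreal (exp (c * small_part (X i j) \<omega>))) \<partial>M)
          = (\<Prod>j\<in>J i. \<integral>\<^sup>+ \<omega>. ennreal (exp (c * small_part (X i j) \<omega>)) \<partial>M)"
        by (rule indep_vars_nn_integral[OF finJ[OF i] ind]) auto
      also have "\<dots> = (\<Prod>j\<in>J i. ennreal (exp (c * eff_size M (lv i) (small_part (X i j)))))"
      proof (intro prod.cong refl)
        fix j assume j: "j \<in> J i"
        have "exp (c * eff_size M (lv i) (small_part (X i j))) = E j"
          using eff[OF j] E1[OF j] c0 by simp
        then show "(\<integral>\<^sup>+ \<omega>. ennreal (exp (c * small_part (X i j) \<omega>)) \<partial>M) = ennreal (exp (c * eff_size M (lv i) (small_part (X i j))))"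
          using nnE[OF j] by simp
      qed
      also have "\<dots> = ennreal (exp (c * (\<Sum>j\<in>J i. eff_size M (lv i) (small_part (X i j)))))"
        by (simp add: prod_ennreal exp_sum[OF finJ[OF i], symmetric] sum_distrib_left)
      also have "ennreal (2 * exp (- c * A)) * \<dots> \<le> ennreal (2 * exp (- c * A)) * ennreal (exp (c * (b + 1)))"
        using small[OF i] c0 by (intro mult_left_mono ennreal_leI) auto
      also have "\<dots> = ennreal (g (lv i))"
      proof -
        have "2 * exp (- c * A) * exp (c * (b + 1)) = 2 * exp (- (2 * c))"
          by (simp add: exp_add[symmetric] A_def algebra_simps)
        also have "exp (- (2 * c)) = 1 / (real k)^2"
        proof -
          have ek: "exp c = real k" using k2 unfolding c_def by (intro exp_ln) auto
          have "exp (2 * c) = (real k)^2"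
            using exp_of_nat_mult[of 2 c] ek by simp
          then show ?thesis by (simp add: exp_minus divide_inverse)
        qed
        finally show ?thesis using False by (simp add: g_def k_def ennreal_mult[symmetric])
      qed
      finally show ?thesis .
    qed
  qed


  have pw: "(SUP i\<in>{..<m}. ennreal (\<Sum>j\<in>J i. X i j \<omega>)) \<le>
     ennreal A + (\<Sum>i<m. ennreal (max 0 (S i \<omega> - A))) + (\<Sum>i<m. \<Sum>j\<in>J i. ennreal (large_part (X i j) \<omega>))"
    if \<omega>: "\<omega> \<in> space M" for \<omega>
  proof (rule SUP_least)
    fix i assume "i \<in> {..<m}"
    then have i: "i < m" by simp
    have "(\<Sum>j\<in>J i. X i j \<omega>) = S i \<omega> + (\<Sum>j\<in>J i. large_part (X i j) \<omega>)"
      unfolding S_def sum.distrib[symmetric]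
      by (intro sum.cong refl) (auto simp: small_part_def large_part_def)
    also have "\<dots> \<le> A + (\<Sum>i<m. max 0 (S i \<omega> - A)) + (\<Sum>i<m. \<Sum>j\<in>J i. large_part (X i j) \<omega>)"
    proof -
      have "max 0 (S i \<omega> - A) \<le> (\<Sum>i<m. max 0 (S i \<omega> - A))"
        using i by (intro member_le_sum) auto
      moreover have "(\<Sum>j\<in>J i. large_part (X i j) \<omega>) \<le> (\<Sum>i<m. \<Sum>j\<in>J i. large_part (X i j) \<omega>)"
        using i lg_nn by (intro member_le_sum[where f="\<lambda>i. \<Sum>j\<in>J i. large_part (X i j) \<omega>"] sum_nonneg) auto
      ultimately show ?thesis by linarith
    qed
    finally have "ennreal (\<Sum>j\<in>J i. X i j \<omega>) \<le> ennreal (A + (\<Sum>i<m. max 0 (S i \<omega> - A)) + (\<Sum>i<m. \<Sum>j\<in>J i. large_part (X i j) \<omega>))"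
      by (rule ennreal_leI)
    also have "\<dots> = ennreal A + (\<Sum>i<m. ennreal (max 0 (S i \<omega> - A))) + (\<Sum>i<m. \<Sum>j\<in>J i. ennreal (large_part (X i j) \<omega>))"
    proof -
      have e1: "ennreal (\<Sum>i<m. max 0 (S i \<omega> - A)) = (\<Sum>i<m. ennreal (max 0 (S i \<omega> - A)))"
        by (rule sum_ennreal[symmetric]) auto
      have e2: "ennreal (\<Sum>i<m. \<Sum>j\<in>J i. large_part (X i j) \<omega>) = (\<Sum>i<m. \<Sum>j\<in>J i. ennreal (large_part (X i j) \<omega>))"
        using lg_nn by (simp add: sum_nonneg)
      show ?thesis using A0 lg_nn
        by (simp only: ennreal_plus sum_nonneg max.cobounded1 e1[symmetric] e2[symmetric] add_nonneg_nonneg)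
    qed
    finally show "ennreal (\<Sum>j\<in>J i. X i j \<omega>) \<le> \<dots>" .
  qed
  have "(\<integral>\<^sup>+ \<omega>. (SUP i\<in>{..<m}. ennreal (\<Sum>j\<in>J i. X i j \<omega>)) \<partial>M) \<le>
     (\<integral>\<^sup>+ \<omega>. ennreal A + (\<Sum>i<m. ennreal (max 0 (S i \<omega> - A))) + (\<Sum>i<m. \<Sum>j\<in>J i. ennreal (large_part (X i j) \<omega>)) \<partial>M)"
    using pw by (intro nn_integral_mono) auto
  also have "\<dots> = (\<integral>\<^sup>+ \<omega>. ennreal A \<partial>M) + (\<Sum>i<m. \<integral>\<^sup>+ \<omega>. ennreal (max 0 (S i \<omega> - A)) \<partial>M)
       + (\<Sum>i<m. \<Sum>j\<in>J i. \<integral>\<^sup>+ \<omega>. ennreal (large_part (X i j) \<omega>) \<partial>M)"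
  proof -
    have mP: "(\<lambda>\<omega>. ennreal (max 0 (S i \<omega> - A))) \<in> borel_measurable M" if "i \<in> {..<m}" for i
    proof -
      have "S i \<in> borel_measurable M" using S_meas that by simp
      then show ?thesis by measurable
    qed
    have mQ: "(\<lambda>\<omega>. ennreal (large_part (X i j) \<omega>)) \<in> borel_measurable M" if "i \<in> {..<m}" "j \<in> J i" for i j
    proof -
      have "large_part (X i j) \<in> borel_measurable M" using lg_meas that by simp
      then show ?thesis by measurable
    qed
    have mQ': "(\<lambda>\<omega>. \<Sum>j\<in>J i. ennreal (large_part (X i j) \<omega>)) \<in> borel_measurable M" if "i \<in> {..<m}" for i
      using mQ that by (intro borel_measurable_sum) auto
    have iP: "(\<integral>\<^sup>+ \<omega>. (\<Sum>i<m. ennreal (max 0 (S i \<omega> - A))) \<partial>M) = (\<Sum>i<m. \<integral>\<^sup>+ \<omega>. ennreal (max 0 (S i \<omega> - A)) \<partial>M)"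
      by (rule nn_integral_sum) (use mP in auto)
    have iQ: "(\<integral>\<^sup>+ \<omega>. (\<Sum>i<m. \<Sum>j\<in>J i. ennreal (large_part (X i j) \<omega>)) \<partial>M) = (\<Sum>i<m. \<Sum>j\<in>J i. \<integral>\<^sup>+ \<omega>. ennreal (large_part (X i j) \<omega>) \<partial>M)"
      apply (subst nn_integral_sum) using mQ' apply auto[2]
      apply (intro sum.cong refl nn_integral_sum) using mQ by auto
    have "(\<integral>\<^sup>+ \<omega>. ennreal A + (\<Sum>i<m. ennreal (max 0 (S i \<omega> - A))) + (\<Sum>i<m. \<Sum>j\<in>J i. ennreal (large_part (X i j) \<omega>)) \<partial>M)
       = (\<integral>\<^sup>+ \<omega>. ennreal A + (\<Sum>i<m. ennreal (max 0 (S i \<omega> - A))) \<partial>M) + (\<integral>\<^sup>+ \<omega>. (\<Sum>i<m. \<Sum>j\<in>J i. ennreal (large_part (X i j) \<omega>)) \<partial>M)"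
      apply (rule nn_integral_add)
      using mP mQ' by (auto intro!: borel_measurable_sum borel_measurable_add)
    also have "(\<integral>\<^sup>+ \<omega>. ennreal A + (\<Sum>i<m. ennreal (max 0 (S i \<omega> - A))) \<partial>M)
       = (\<integral>\<^sup>+ \<omega>. ennreal A \<partial>M) + (\<integral>\<^sup>+ \<omega>. (\<Sum>i<m. ennreal (max 0 (S i \<omega> - A))) \<partial>M)"
      apply (rule nn_integral_add)
      using mP by (auto intro!: borel_measurable_sum)
    finally show ?thesis by (simp only: iP iQ)
  qed
  also have "\<dots> \<le> ennreal A + ennreal (b + 3) + 2"
  proof (intro add_mono large)
    show "(\<integral>\<^sup>+ \<omega>. ennreal A \<partial>M) \<le> ennreal A" by (simp add: emeasure_space_1)
    have "(\<Sum>i<m. \<integral>\<^sup>+ \<omega>. ennreal (max 0 (S i \<omega> - A)) \<partial>M) \<le> (\<Sum>i<m. ennreal (g (lv i)))"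
      using mach by (intro sum_mono) auto
    also have "\<dots> = ennreal (\<Sum>i<m. g (lv i))"
      using b_nonneg by (intro sum_ennreal) (auto simp: g_def)
    also have "\<dots> \<le> ennreal (\<Sum>l=1..m. g l)"
    proof (intro ennreal_leI majorize)
      show "\<And>i. i < m \<Longrightarrow> lv i \<in> {1..m}" by (rule l_range)
      show "\<And>l. l \<in> {1..m} \<Longrightarrow> card {i. i < m \<and> lv i \<le> l} \<le> l" by (rule l_count)
      fix a c :: nat assume "1 \<le> a" "a \<le> c"
      then show "g c \<le> g a"
      proof (cases "c \<le> 1")
        case True then show ?thesis using \<open>a \<le> c\<close> by (simp add: g_def)
      next
        case False
        then have c2: "real c \<ge> 2" by simp
        have "2 / (real c)^2 \<le> 2 / (real (max a 2))^2"
          using c2 \<open>a \<le> c\<close> by (intro divide_left_mono power_mono) auto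
        moreover have "2 / (real (max a 2))^2 \<le> g a"
        proof (cases "a \<le> 1")
          case True
          then have "2 / (real (max a 2))^2 = 1/2" by (simp add: max_def)
          then show ?thesis using True b_nonneg by (simp add: g_def)
        next
          case False then have "max a 2 = a" by simp
          then show ?thesis using False by (simp add: g_def)
        qed
        ultimately show ?thesis using False by (simp add: g_def)
      qed
    qed
    also have "\<dots> \<le> ennreal (b + 3)"
      using gsum[OF b_nonneg, of m] by (intro ennreal_leI) (simp add: g_def)
    finally show "(\<Sum>i<m. \<integral>\<^sup>+ \<omega>. ennreal (max 0 (S i \<omega> - A)) \<partial>M) \<le> ennreal (b + 3)" .
  qed
  also have "\<dots> \<le> ennreal (4 * b + 10)"
  proof -
    have "ennreal A + ennreal (b + 3) + 2 = ennreal (A + (b + 3) + 2)"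
      using b_nonneg A0 by (simp add: ennreal_plus)
    also have "\<dots> \<le> ennreal (4 * b + 10)"
      using b_nonneg by (intro ennreal_leI) (simp add: A_def)
    finally show ?thesis .
  qed
  finally show ?thesis .
qed

end
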